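(* Let $(\mathbb{X},\dagger)$ be a Moore-Penrose dagger additive category and let $\begin{bmatrix}\alpha&\beta\\ \beta^\dagger&\delta\end{bmatrix}:B\oplus C\to B\oplus C$ be a $\dagger$-positive map. Then for any map $\begin{bmatrix}\phi&\psi\end{bmatrix}:B\oplus C\to D$ such that $\begin{bmatrix}\alpha&\beta\\ \beta^\dagger&\delta\end{bmatrix}=\begin{bmatrix}\phi&\psi\end{bmatrix}^\dagger\circ\begin{bmatrix}\phi&\psi\end{bmatrix}$, we have $\beta^\dagger\circ\alpha^\circ=\psi^\dagger\circ(\phi^\circ)^\dagger$.
   Context: A dagger additive category is a dagger category (contravariant identity-on-objects involutive functor $\dagger$) whose hom-sets are abelian groups with bilinear composition and additive $\dagger$, having a zero object and finite biproducts whose projections $\pi_j$ and injections $\iota_j$ satisfy $\pi_j^\dagger=\iota_j$. Maps between biproducts are written as matrices; composition is matrix multiplication and $\dagger$ is transpose with entrywise $\dagger$. An endomorphism $p$ is $\dagger$-positive if $p=\chi^\dagger\circ\chi$ for some map $\chi$. A Moore-Penrose inverse of $f:A\to B$ is a map $f^\circ:B\to A$ with $f f^\circ f=f$, $f^\circ f f^\circ=f^\circ$, $(f f^\circ)^\dagger=f f^\circ$, $(f^\circ f)^\dagger=f^\circ f$ (unique when it exists); a Moore-Penrose dagger additive category is one in which every map has a Moore-Penrose inverse. Here $\alpha:B\to B$, $\beta:C\to B$, $\delta:C\to C$, $\phi:B\to D$, $\psi:C\to D$. *)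

theory Defs
  imports Main
begin

text \<open>Hom A B is the hom-set from A to B; Cmp g f is the
composite g after f; Add, Neg, Zer give the abelian group structure on
each hom-set.\<close>

record ('o, 'm) dcat =
  Hom :: "'o \<Rightarrow> 'o \<Rightarrow> 'm set"
  Cmp :: "'m \<Rightarrow> 'm \<Rightarrow> 'm"
  Idn :: "'o \<Rightarrow> 'm"
  Dag :: "'m \<Rightarrow> 'm"
  Add :: "'m \<Rightarrow> 'm \<Rightarrow> 'm"
  Neg :: "'m \<Rightarrow> 'm"
  Zer :: "'o \<Rightarrow> 'o \<Rightarrow> 'm"

definition is_dagger_biproduct ::
  "('o, 'm) dcat \<Rightarrow> 'o \<Rightarrow> 'o \<Rightarrow> 'o \<Rightarrow> 'm \<Rightarrow> 'm \<Rightarrow> 'm \<Rightarrow> 'm \<Rightarrow> bool" where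
  "is_dagger_biproduct X B C S p1 p2 i1 i2 \<longleftrightarrow>
     p1 \<in> Hom X S B \<and> p2 \<in> Hom X S C \<and> i1 \<in> Hom X B S \<and> i2 \<in> Hom X C S \<and>
     Cmp X p1 i1 = Idn X B \<and> Cmp X p2 i2 = Idn X C \<and>
     Cmp X p1 i2 = Zer X C B \<and> Cmp X p2 i1 = Zer X B C \<and>
     Add X (Cmp X i1 p1) (Cmp X i2 p2) = Idn X S \<and>
     Dag X p1 = i1 \<and> Dag X p2 = i2"

definition dagger_additive_category :: "('o, 'm) dcat \<Rightarrow> bool" where
  "dagger_additive_category X \<longleftrightarrow>
     \<comment> \<open>hom-sets are disjoint\<close>
     (\<forall>A B A' B' f. f \<in> Hom X A B \<longrightarrow> f \<in> Hom X A' B' \<longrightarrow> A = A' \<and> B = B') \<and>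
     \<comment> \<open>category\<close>
     (\<forall>A B C f g. f \<in> Hom X A B \<longrightarrow> g \<in> Hom X B C \<longrightarrow> Cmp X g f \<in> Hom X A C) \<and>
     (\<forall>A B C D f g h. f \<in> Hom X A B \<longrightarrow> g \<in> Hom X B C \<longrightarrow> h \<in> Hom X C D \<longrightarrow>
        Cmp X h (Cmp X g f) = Cmp X (Cmp X h g) f) \<and>
     (\<forall>A. Idn X A \<in> Hom X A A) \<and>
     (\<forall>A B f. f \<in> Hom X A B \<longrightarrow> Cmp X (Idn X B) f = f \<and> Cmp X f (Idn X A) = f) \<and>
     \<comment> \<open>dagger: contravariant, identity on objects, involutive\<close>
     (\<forall>A B f. f \<in> Hom X A B \<longrightarrow> Dag X f \<in> Hom X B A \<and> Dag X (Dag X f) = f) \<and>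
     (\<forall>A B C f g. f \<in> Hom X A B \<longrightarrow> g \<in> Hom X B C \<longrightarrow>
        Dag X (Cmp X g f) = Cmp X (Dag X f) (Dag X g)) \<and>
     (\<forall>A. Dag X (Idn X A) = Idn X A) \<and>
     \<comment> \<open>abelian group structure on hom-sets\<close>
     (\<forall>A B f g. f \<in> Hom X A B \<longrightarrow> g \<in> Hom X A B \<longrightarrow> Add X f g \<in> Hom X A B) \<and>
     (\<forall>A B f. f \<in> Hom X A B \<longrightarrow> Neg X f \<in> Hom X A B) \<and>
     (\<forall>A B. Zer X A B \<in> Hom X A B) \<and>
     (\<forall>A B f g h. f \<in> Hom X A B \<longrightarrow> g \<in> Hom X A B \<longrightarrow> h \<in> Hom X A B \<longrightarrow>
        Add X (Add X f g) h = Add X f (Add X g h)) \<and>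
     (\<forall>A B f g. f \<in> Hom X A B \<longrightarrow> g \<in> Hom X A B \<longrightarrow> Add X f g = Add X g f) \<and>
     (\<forall>A B f. f \<in> Hom X A B \<longrightarrow> Add X f (Zer X A B) = f) \<and>
     (\<forall>A B f. f \<in> Hom X A B \<longrightarrow> Add X f (Neg X f) = Zer X A B) \<and>
     \<comment> \<open>bilinear composition, additive dagger\<close>
     (\<forall>A B C f g h. f \<in> Hom X A B \<longrightarrow> g \<in> Hom X A B \<longrightarrow> h \<in> Hom X B C \<longrightarrow>
        Cmp X h (Add X f g) = Add X (Cmp X h f) (Cmp X h g)) \<and>
     (\<forall>A B C f g h. f \<in> Hom X A B \<longrightarrow> g \<in> Hom X B C \<longrightarrow> h \<in> Hom X B C \<longrightarrow>
        Cmp X (Add X g h) f = Add X (Cmp X g f) (Cmp X h f)) \<and>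
     (\<forall>A B f g. f \<in> Hom X A B \<longrightarrow> g \<in> Hom X A B \<longrightarrow>
        Dag X (Add X f g) = Add X (Dag X f) (Dag X g)) \<and>
     \<comment> \<open>zero object\<close>
     (\<exists>Z. \<forall>A. Hom X A Z = {Zer X A Z} \<and> Hom X Z A = {Zer X Z A}) \<and>
     \<comment> \<open>binary dagger biproducts (with the zero object: all finite ones)\<close>
     (\<forall>B C. \<exists>S p1 p2 i1 i2. is_dagger_biproduct X B C S p1 p2 i1 i2)"

definition dagger_positive :: "('o, 'm) dcat \<Rightarrow> 'o \<Rightarrow> 'm \<Rightarrow> bool" where
  "dagger_positive X A p \<longleftrightarrow> (\<exists>E \<chi>. \<chi> \<in> Hom X A E \<and> p = Cmp X (Dag X \<chi>) \<chi>)"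

definition is_mp_inverse :: "('o, 'm) dcat \<Rightarrow> 'o \<Rightarrow> 'o \<Rightarrow> 'm \<Rightarrow> 'm \<Rightarrow> bool" where
  "is_mp_inverse X A B f g \<longleftrightarrow> g \<in> Hom X B A \<and>
     Cmp X f (Cmp X g f) = f \<and> Cmp X g (Cmp X f g) = g \<and>
     Dag X (Cmp X f g) = Cmp X f g \<and> Dag X (Cmp X g f) = Cmp X g f"

text \<open>The Moore-Penrose inverse of f : A \<rightarrow> B (unique when it exists).\<close>
definition mp_inv :: "('o, 'm) dcat \<Rightarrow> 'o \<Rightarrow> 'o \<Rightarrow> 'm \<Rightarrow> 'm" where
  "mp_inv X A B f = (THE g. is_mp_inverse X A B f g)"

definition mp_dagger_additive_category :: "('o, 'm) dcat \<Rightarrow> bool" where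
  "mp_dagger_additive_category X \<longleftrightarrow> dagger_additive_category X \<and>
     (\<forall>A B f. f \<in> Hom X A B \<longrightarrow> (\<exists>g. is_mp_inverse X A B f g))"

end

theory Submission
  imports Defs
begin

locale dac =
  fixes X :: "('o,'m) dcat"
  assumes ax: "dagger_additive_category X"
begin

lemmas AX = ax[unfolded dagger_additive_category_def]

lemma comp[intro]: "f \<in> Hom X A B \<Longrightarrow> g \<in> Hom X B C \<Longrightarrow> Cmp X g f \<in> Hom X A C"
  using AX[THEN conjunct2, THEN conjunct1] by blast
lemma assoc: "f \<in> Hom X A B \<Longrightarrow> g \<in> Hom X B C \<Longrightarrow> h \<in> Hom X C D \<Longrightarrow>
        Cmp X h (Cmp X g f) = Cmp X (Cmp X h g) f"
  using AX[THEN conjunct2, THEN conjunct2, THEN conjunct1] by blast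
lemma idn[intro]: "Idn X A \<in> Hom X A A"
  using AX[THEN conjunct2, THEN conjunct2, THEN conjunct2, THEN conjunct1] by blast
lemma idl: "f \<in> Hom X A B \<Longrightarrow> Cmp X (Idn X B) f = f"
  using AX[THEN conjunct2, THEN conjunct2, THEN conjunct2, THEN conjunct2, THEN conjunct1] by blast
lemma idr: "f \<in> Hom X A B \<Longrightarrow> Cmp X f (Idn X A) = f"
  using AX[THEN conjunct2, THEN conjunct2, THEN conjunct2, THEN conjunct2, THEN conjunct1] by blast
lemma dag[intro]: "f \<in> Hom X A B \<Longrightarrow> Dag X f \<in> Hom X B A"
  using AX[THEN conjunct2, THEN conjunct2, THEN conjunct2, THEN conjunct2, THEN conjunct2, THEN conjunct1] by blast
lemma dagdag: "f \<in> Hom X A B \<Longrightarrow> Dag X (Dag X f) = f"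
  using AX[THEN conjunct2, THEN conjunct2, THEN conjunct2, THEN conjunct2, THEN conjunct2, THEN conjunct1] by blast
lemma dagcmp: "f \<in> Hom X A B \<Longrightarrow> g \<in> Hom X B C \<Longrightarrow> Dag X (Cmp X g f) = Cmp X (Dag X f) (Dag X g)"
  using AX[THEN conjunct2, THEN conjunct2, THEN conjunct2, THEN conjunct2, THEN conjunct2, THEN conjunct2, THEN conjunct1] by blast
lemma add[intro]: "f \<in> Hom X A B \<Longrightarrow> g \<in> Hom X A B \<Longrightarrow> Add X f g \<in> Hom X A B"
  using AX[THEN conjunct2, THEN conjunct2, THEN conjunct2, THEN conjunct2, THEN conjunct2, THEN conjunct2, THEN conjunct2, THEN conjunct2, THEN conjunct1] by blast
lemma neg[intro]: "f \<in> Hom X A B \<Longrightarrow> Neg X f \<in> Hom X A B"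
  using AX[THEN conjunct2, THEN conjunct2, THEN conjunct2, THEN conjunct2, THEN conjunct2, THEN conjunct2, THEN conjunct2, THEN conjunct2, THEN conjunct2, THEN conjunct1] by blast
lemma zer[intro]: "Zer X A B \<in> Hom X A B"
  using AX[THEN conjunct2, THEN conjunct2, THEN conjunct2, THEN conjunct2, THEN conjunct2, THEN conjunct2, THEN conjunct2, THEN conjunct2, THEN conjunct2, THEN conjunct2, THEN conjunct1] by blast
lemma add_assoc: "f \<in> Hom X A B \<Longrightarrow> g \<in> Hom X A B \<Longrightarrow> h \<in> Hom X A B \<Longrightarrow>
        Add X (Add X f g) h = Add X f (Add X g h)"
  using AX[THEN conjunct2, THEN conjunct2, THEN conjunct2, THEN conjunct2, THEN conjunct2, THEN conjunct2, THEN conjunct2, THEN conjunct2, THEN conjunct2, THEN conjunct2, THEN conjunct2, THEN conjunct1] by blast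
lemma add_comm: "f \<in> Hom X A B \<Longrightarrow> g \<in> Hom X A B \<Longrightarrow> Add X f g = Add X g f"
  using AX[THEN conjunct2, THEN conjunct2, THEN conjunct2, THEN conjunct2, THEN conjunct2, THEN conjunct2, THEN conjunct2, THEN conjunct2, THEN conjunct2, THEN conjunct2, THEN conjunct2, THEN conjunct2, THEN conjunct1] by blast
lemma add_zer: "f \<in> Hom X A B \<Longrightarrow> Add X f (Zer X A B) = f"
  using AX[THEN conjunct2, THEN conjunct2, THEN conjunct2, THEN conjunct2, THEN conjunct2, THEN conjunct2, THEN conjunct2, THEN conjunct2, THEN conjunct2, THEN conjunct2, THEN conjunct2, THEN conjunct2, THEN conjunct2, THEN conjunct1] by blast
lemma add_neg: "f \<in> Hom X A B \<Longrightarrow> Add X f (Neg X f) = Zer X A B"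
  using AX[THEN conjunct2, THEN conjunct2, THEN conjunct2, THEN conjunct2, THEN conjunct2, THEN conjunct2, THEN conjunct2, THEN conjunct2, THEN conjunct2, THEN conjunct2, THEN conjunct2, THEN conjunct2, THEN conjunct2, THEN conjunct2, THEN conjunct1] by blast
lemma distl: "f \<in> Hom X A B \<Longrightarrow> g \<in> Hom X A B \<Longrightarrow> h \<in> Hom X B C \<Longrightarrow>
        Cmp X h (Add X f g) = Add X (Cmp X h f) (Cmp X h g)"
  using AX[THEN conjunct2, THEN conjunct2, THEN conjunct2, THEN conjunct2, THEN conjunct2, THEN conjunct2, THEN conjunct2, THEN conjunct2, THEN conjunct2, THEN conjunct2, THEN conjunct2, THEN conjunct2, THEN conjunct2, THEN conjunct2, THEN conjunct2, THEN conjunct1] by blast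
lemma distr: "f \<in> Hom X A B \<Longrightarrow> g \<in> Hom X B C \<Longrightarrow> h \<in> Hom X B C \<Longrightarrow>
        Cmp X (Add X g h) f = Add X (Cmp X g f) (Cmp X h f)"
  using AX[THEN conjunct2, THEN conjunct2, THEN conjunct2, THEN conjunct2, THEN conjunct2, THEN conjunct2, THEN conjunct2, THEN conjunct2, THEN conjunct2, THEN conjunct2, THEN conjunct2, THEN conjunct2, THEN conjunct2, THEN conjunct2, THEN conjunct2, THEN conjunct2, THEN conjunct1] by blast

lemma zer_add: "f \<in> Hom X A B \<Longrightarrow> Add X (Zer X A B) f = f"
  by (metis add_comm add_zer zer)

lemma cancel: assumes f: "f \<in> Hom X A B" and g: "g \<in> Hom X A B" and e: "Add X f g = f" shows "g = Zer X A B"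
proof -
  have nf: "Neg X f \<in> Hom X A B" using f by (rule neg)
  have z: "Add X (Neg X f) f = Zer X A B" using add_comm[OF nf f] add_neg[OF f] by simp
  have "g = Add X (Zer X A B) g" using zer_add[OF g] by simp
  also have "\<dots> = Add X (Add X (Neg X f) f) g" using z by simp
  also have "\<dots> = Add X (Neg X f) (Add X f g)" by (rule add_assoc[OF nf f g])
  also have "\<dots> = Zer X A B" using e z by simp
  finally show ?thesis .
qed

lemma cmp_zer_r: assumes h: "h \<in> Hom X B C" shows "Cmp X h (Zer X A B) = Zer X A C"
proof -
  have "Cmp X h (Zer X A B) = Cmp X h (Add X (Zer X A B) (Zer X A B))" by (simp add: add_zer[OF zer])
  also have "\<dots> = Add X (Cmp X h (Zer X A B)) (Cmp X h (Zer X A B))" by (rule distl[OF zer zer h])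
  finally have e: "Add X (Cmp X h (Zer X A B)) (Cmp X h (Zer X A B)) = Cmp X h (Zer X A B)" by simp
  have t: "Cmp X h (Zer X A B) \<in> Hom X A C" using zer h by (rule comp)
  show ?thesis by (rule cancel[OF t t e])
qed

lemma cmp_zer_l: assumes f: "f \<in> Hom X A B" shows "Cmp X (Zer X B C) f = Zer X A C"
proof -
  have "Cmp X (Zer X B C) f = Cmp X (Add X (Zer X B C) (Zer X B C)) f" by (simp add: add_zer[OF zer])
  also have "\<dots> = Add X (Cmp X (Zer X B C) f) (Cmp X (Zer X B C) f)" by (rule distr[OF f zer zer])
  finally have e: "Add X (Cmp X (Zer X B C) f) (Cmp X (Zer X B C) f) = Cmp X (Zer X B C) f" by simp
  have t: "Cmp X (Zer X B C) f \<in> Hom X A C" using f zer by (rule comp)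
  show ?thesis by (rule cancel[OF t t e])
qed

lemma mp_unique:
  assumes f: "f \<in> Hom X A B" and g: "is_mp_inverse X A B f g" and h: "is_mp_inverse X A B f h"
  shows "g = h"
proof -
  from g have gH: "g \<in> Hom X B A" and g1: "Cmp X f (Cmp X g f) = f" and g2: "Cmp X g (Cmp X f g) = g"
    and g3: "Dag X (Cmp X f g) = Cmp X f g" and g4: "Dag X (Cmp X g f) = Cmp X g f"
    unfolding is_mp_inverse_def by auto
  from h have hH: "h \<in> Hom X B A" and h1: "Cmp X f (Cmp X h f) = f" and h2: "Cmp X h (Cmp X f h) = h"
    and h3: "Dag X (Cmp X f h) = Cmp X f h" and h4: "Dag X (Cmp X h f) = Cmp X h f"
    unfolding is_mp_inverse_def by auto
  have fgH: "Cmp X f g \<in> Hom X B B" using gH f by (rule comp)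
  have fhH: "Cmp X f h \<in> Hom X B B" using hH f by (rule comp)
  have gfH: "Cmp X g f \<in> Hom X A A" using f gH by (rule comp)
  have hfH: "Cmp X h f \<in> Hom X A A" using f hH by (rule comp)
  have fg: "Cmp X f g = Cmp X f h"
  proof -
    have "Cmp X f g = Dag X (Cmp X f g)" using g3 by simp
    also have "\<dots> = Dag X (Cmp X (Cmp X f (Cmp X h f)) g)" using h1 by simp
    also have "Cmp X (Cmp X f (Cmp X h f)) g = Cmp X (Cmp X f h) (Cmp X f g)"
      using assoc[OF gH f hH] assoc[OF f hH f] assoc[OF gH f fhH] by simp
    also have "Dag X (Cmp X (Cmp X f h) (Cmp X f g)) = Cmp X (Dag X (Cmp X f g)) (Dag X (Cmp X f h))"
      by (rule dagcmp[OF fgH fhH])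
    also have "\<dots> = Cmp X (Cmp X f g) (Cmp X f h)" using g3 h3 by simp
    also have "\<dots> = Cmp X (Cmp X f (Cmp X g f)) h"
      using assoc[OF hH f fgH] assoc[OF f gH f] by simp
    also have "\<dots> = Cmp X f h" using g1 by simp
    finally show ?thesis .
  qed
  have gf: "Cmp X g f = Cmp X h f"
  proof -
    have "Cmp X g f = Dag X (Cmp X g f)" using g4 by simp
    also have "\<dots> = Dag X (Cmp X g (Cmp X f (Cmp X h f)))" using h1 by simp
    also have "Cmp X g (Cmp X f (Cmp X h f)) = Cmp X (Cmp X g f) (Cmp X h f)"
      using assoc[OF hfH f gH] by simp
    also have "Dag X (Cmp X (Cmp X g f) (Cmp X h f)) = Cmp X (Dag X (Cmp X h f)) (Dag X (Cmp X g f))"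
      by (rule dagcmp[OF hfH gfH])
    also have "\<dots> = Cmp X (Cmp X h f) (Cmp X g f)" using g4 h4 by simp
    also have "\<dots> = Cmp X h (Cmp X f (Cmp X g f))"
      using assoc[OF gfH f hH] by simp
    also have "\<dots> = Cmp X h f" using g1 by simp
    finally show ?thesis .
  qed
  have "g = Cmp X g (Cmp X f g)" using g2 by simp
  also have "\<dots> = Cmp X (Cmp X g f) g" using assoc[OF gH f gH] .
  also have "\<dots> = Cmp X (Cmp X h f) g" using gf by simp
  also have "\<dots> = Cmp X h (Cmp X f g)" using assoc[OF gH f hH] by simp
  also have "\<dots> = Cmp X h (Cmp X f h)" using fg by simp
  also have "\<dots> = h" using h2 .
  finally show ?thesis .
qed

lemma mp_inv_eq: "f \<in> Hom X A B \<Longrightarrow> is_mp_inverse X A B f g \<Longrightarrow> mp_inv X A B f = g"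
  unfolding mp_inv_def by (metis mp_unique the_equality)


lemma sandwich:
  assumes q: "q \<in> Hom X S Y" and i: "i \<in> Hom X U S" and a: "a \<in> Hom X V U"
    and p: "p \<in> Hom X S V" and j: "j \<in> Hom X W S"
  shows "Cmp X q (Cmp X (Cmp X i (Cmp X a p)) j) = Cmp X (Cmp X q i) (Cmp X a (Cmp X p j))"
proof -
  have ap: "Cmp X a p \<in> Hom X S U" using p a by (rule comp)
  have pj: "Cmp X p j \<in> Hom X W V" using j p by (rule comp)
  have apj: "Cmp X a (Cmp X p j) \<in> Hom X W U" using pj a by (rule comp)
  have "Cmp X (Cmp X i (Cmp X a p)) j = Cmp X i (Cmp X (Cmp X a p) j)" using assoc[OF j ap i] by simp
  also have "\<dots> = Cmp X i (Cmp X a (Cmp X p j))" using assoc[OF j p a] by simp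
  finally have "Cmp X q (Cmp X (Cmp X i (Cmp X a p)) j) = Cmp X q (Cmp X i (Cmp X a (Cmp X p j)))" by simp
  also have "\<dots> = Cmp X (Cmp X q i) (Cmp X a (Cmp X p j))" using assoc[OF apj i q] .
  finally show ?thesis .
qed

lemma entries:
  assumes bp: "is_dagger_biproduct X B C S p1 p2 i1 i2"
    and a: "a \<in> Hom X B B" and b: "b \<in> Hom X C B" and c: "c \<in> Hom X B C" and d: "d \<in> Hom X C C"
    and M: "M = Add X (Add X (Cmp X i1 (Cmp X a p1)) (Cmp X i1 (Cmp X b p2)))
                   (Add X (Cmp X i2 (Cmp X c p1)) (Cmp X i2 (Cmp X d p2)))"
  shows "Cmp X p1 (Cmp X M i1) = a" "Cmp X p1 (Cmp X M i2) = b"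
proof -
  from bp have p1: "p1 \<in> Hom X S B" and p2: "p2 \<in> Hom X S C" and i1: "i1 \<in> Hom X B S"
    and i2: "i2 \<in> Hom X C S" and e11: "Cmp X p1 i1 = Idn X B" and e22: "Cmp X p2 i2 = Idn X C"
    and e12: "Cmp X p1 i2 = Zer X C B" and e21: "Cmp X p2 i1 = Zer X B C"
    unfolding is_dagger_biproduct_def by auto
  have T1: "Cmp X i1 (Cmp X a p1) \<in> Hom X S S" using p1 a i1 by blast
  have T2: "Cmp X i1 (Cmp X b p2) \<in> Hom X S S" using p2 b i1 by blast
  have T3: "Cmp X i2 (Cmp X c p1) \<in> Hom X S S" using p1 c i2 by blast
  have T4: "Cmp X i2 (Cmp X d p2) \<in> Hom X S S" using p2 d i2 by blast
  have T12: "Add X (Cmp X i1 (Cmp X a p1)) (Cmp X i1 (Cmp X b p2)) \<in> Hom X S S" using T1 T2 by blast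
  have T34: "Add X (Cmp X i2 (Cmp X c p1)) (Cmp X i2 (Cmp X d p2)) \<in> Hom X S S" using T3 T4 by blast
  have gen: "Cmp X p1 (Cmp X M j) = Add X (Add X (Cmp X p1 (Cmp X (Cmp X i1 (Cmp X a p1)) j))
                   (Cmp X p1 (Cmp X (Cmp X i1 (Cmp X b p2)) j)))
                   (Add X (Cmp X p1 (Cmp X (Cmp X i2 (Cmp X c p1)) j))
                   (Cmp X p1 (Cmp X (Cmp X i2 (Cmp X d p2)) j)))" if j: "j \<in> Hom X W S" for j W
  proof -
    have h1: "Cmp X (Cmp X i1 (Cmp X a p1)) j \<in> Hom X W S" using j T1 by (rule comp)
    have h2: "Cmp X (Cmp X i1 (Cmp X b p2)) j \<in> Hom X W S" using j T2 by (rule comp)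
    have h3: "Cmp X (Cmp X i2 (Cmp X c p1)) j \<in> Hom X W S" using j T3 by (rule comp)
    have h4: "Cmp X (Cmp X i2 (Cmp X d p2)) j \<in> Hom X W S" using j T4 by (rule comp)
    have "Cmp X M j = Add X (Cmp X (Add X (Cmp X i1 (Cmp X a p1)) (Cmp X i1 (Cmp X b p2))) j)
                    (Cmp X (Add X (Cmp X i2 (Cmp X c p1)) (Cmp X i2 (Cmp X d p2))) j)"
      unfolding M by (rule distr[OF j T12 T34])
    also have "\<dots> = Add X (Add X (Cmp X (Cmp X i1 (Cmp X a p1)) j) (Cmp X (Cmp X i1 (Cmp X b p2)) j))
                         (Add X (Cmp X (Cmp X i2 (Cmp X c p1)) j) (Cmp X (Cmp X i2 (Cmp X d p2)) j))"
      using distr[OF j T1 T2] distr[OF j T3 T4] by simp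
    finally have "Cmp X p1 (Cmp X M j) = Cmp X p1 (Add X (Add X (Cmp X (Cmp X i1 (Cmp X a p1)) j) (Cmp X (Cmp X i1 (Cmp X b p2)) j))
                         (Add X (Cmp X (Cmp X i2 (Cmp X c p1)) j) (Cmp X (Cmp X i2 (Cmp X d p2)) j)))" by simp
    then show ?thesis using distl[OF add[OF h1 h2] add[OF h3 h4] p1] distl[OF h1 h2 p1] distl[OF h3 h4 p1] by simp
  qed
  show "Cmp X p1 (Cmp X M i1) = a"
    unfolding gen[OF i1] sandwich[OF p1 i1 a p1 i1] sandwich[OF p1 i1 b p2 i1]
      sandwich[OF p1 i2 c p1 i1] sandwich[OF p1 i2 d p2 i1] e11 e21 e12
    using a b c d
    by (simp add: idl idr cmp_zer_l cmp_zer_r add_zer zer_add zer idl[OF zer] idr[OF zer] cmp_zer_l[OF zer] cmp_zer_r[OF zer] cmp_zer_r[OF idn] cmp_zer_l[OF idn])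
  show "Cmp X p1 (Cmp X M i2) = b"
    unfolding gen[OF i2] sandwich[OF p1 i1 a p1 i2] sandwich[OF p1 i1 b p2 i2]
      sandwich[OF p1 i2 c p1 i2] sandwich[OF p1 i2 d p2 i2] e11 e12 e22 e21
    using a b c d
    by (simp add: idl idr cmp_zer_l cmp_zer_r add_zer zer_add zer idl[OF zer] idr[OF zer] cmp_zer_l[OF zer] cmp_zer_r[OF zer] cmp_zer_r[OF idn] cmp_zer_l[OF idn])
qed


lemma RI:
  assumes bp: "is_dagger_biproduct X B C S p1 p2 i1 i2"
    and \<phi>: "\<phi> \<in> Hom X B D" and \<psi>: "\<psi> \<in> Hom X C D"
    and R: "R = Add X (Cmp X \<phi> p1) (Cmp X \<psi> p2)"
  shows "Cmp X R i1 = \<phi>" "Cmp X R i2 = \<psi>"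
proof -
  from bp have p1: "p1 \<in> Hom X S B" and p2: "p2 \<in> Hom X S C" and i1: "i1 \<in> Hom X B S"
    and i2: "i2 \<in> Hom X C S" and e11: "Cmp X p1 i1 = Idn X B" and e22: "Cmp X p2 i2 = Idn X C"
    and e12: "Cmp X p1 i2 = Zer X C B" and e21: "Cmp X p2 i1 = Zer X B C"
    unfolding is_dagger_biproduct_def by auto
  have a: "Cmp X \<phi> p1 \<in> Hom X S D" using p1 \<phi> by (rule comp)
  have b: "Cmp X \<psi> p2 \<in> Hom X S D" using p2 \<psi> by (rule comp)
  show "Cmp X R i1 = \<phi>"
    unfolding R distr[OF i1 a b] assoc[OF i1 p1 \<phi>, symmetric] assoc[OF i1 p2 \<psi>, symmetric] e11 e21
    using \<phi> \<psi> by (simp add: idr cmp_zer_r add_zer)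
  show "Cmp X R i2 = \<psi>"
    unfolding R distr[OF i2 a b] assoc[OF i2 p1 \<phi>, symmetric] assoc[OF i2 p2 \<psi>, symmetric] e12 e22
    using \<phi> \<psi> by (simp add: idr cmp_zer_r zer_add)
qed

lemma main_loc:
  assumes mp: "\<forall>A B f. f \<in> Hom X A B \<longrightarrow> (\<exists>g. is_mp_inverse X A B f g)"
    and bp: "is_dagger_biproduct X B C S p1 p2 i1 i2"
    and \<alpha>: "\<alpha> \<in> Hom X B B" and \<beta>: "\<beta> \<in> Hom X C B" and \<delta>: "\<delta> \<in> Hom X C C"
    and \<phi>: "\<phi> \<in> Hom X B D" and \<psi>: "\<psi> \<in> Hom X C D"
    and M: "M = Add X (Add X (Cmp X i1 (Cmp X \<alpha> p1)) (Cmp X i1 (Cmp X \<beta> p2)))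
                   (Add X (Cmp X i2 (Cmp X (Dag X \<beta>) p1)) (Cmp X i2 (Cmp X \<delta> p2)))"
    and R: "R = Add X (Cmp X \<phi> p1) (Cmp X \<psi> p2)"
    and MR: "M = Cmp X (Dag X R) R"
  shows "Cmp X (Dag X \<beta>) (mp_inv X B B \<alpha>) = Cmp X (Dag X \<psi>) (Dag X (mp_inv X B D \<phi>))"
proof -
  from bp have p1: "p1 \<in> Hom X S B" and p2: "p2 \<in> Hom X S C" and i1: "i1 \<in> Hom X B S"
    and i2: "i2 \<in> Hom X C S" and d1: "Dag X p1 = i1"
    unfolding is_dagger_biproduct_def by auto
  have RH: "R \<in> Hom X S D" unfolding R using p1 p2 \<phi> \<psi> by blast
  have RdH: "Dag X R \<in> Hom X D S" using RH by (rule dag)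
  have dbH: "Dag X \<beta> \<in> Hom X B C" using \<beta> by (rule dag)
  have dphi: "Dag X \<phi> \<in> Hom X D B" using \<phi> by (rule dag)
  have dpsi: "Dag X \<psi> \<in> Hom X D C" using \<psi> by (rule dag)
  have p1R: "Cmp X p1 (Dag X R) = Dag X \<phi>"
  proof -
    have "Dag X (Cmp X R i1) = Cmp X (Dag X i1) (Dag X R)" by (rule dagcmp[OF i1 RH])
    moreover have "Dag X i1 = p1" using d1 dagdag[OF p1] by simp
    ultimately show ?thesis using RI[OF bp \<phi> \<psi> R] by simp
  qed
  have ent: "Cmp X p1 (Cmp X M j) = Cmp X (Dag X \<phi>) (Cmp X R j)" if j: "j \<in> Hom X W S" for j W
  proof -
    have "Cmp X M j = Cmp X (Dag X R) (Cmp X R j)" unfolding MR using assoc[OF j RH RdH] by simp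
    then have "Cmp X p1 (Cmp X M j) = Cmp X (Cmp X p1 (Dag X R)) (Cmp X R j)"
      using assoc[OF comp[OF j RH] RdH p1] by simp
    then show ?thesis using p1R by simp
  qed
  have aeq: "\<alpha> = Cmp X (Dag X \<phi>) \<phi>"
    using entries(1)[OF bp \<alpha> \<beta> dbH \<delta> M] ent[OF i1] RI[OF bp \<phi> \<psi> R] by simp
  have beq: "\<beta> = Cmp X (Dag X \<phi>) \<psi>"
    using entries(2)[OF bp \<alpha> \<beta> dbH \<delta> M] ent[OF i2] RI[OF bp \<phi> \<psi> R] by simp
  obtain g where g: "is_mp_inverse X B D \<phi> g" using mp \<phi> by blast
  from g have gH: "g \<in> Hom X D B" and g1: "Cmp X \<phi> (Cmp X g \<phi>) = \<phi>" and g2: "Cmp X g (Cmp X \<phi> g) = g"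
    and g3: "Dag X (Cmp X \<phi> g) = Cmp X \<phi> g" and g4: "Dag X (Cmp X g \<phi>) = Cmp X g \<phi>"
    unfolding is_mp_inverse_def by auto
  have gdH: "Dag X g \<in> Hom X B D" using gH by (rule dag)
  define h where "h = Cmp X g (Dag X g)"
  have hH: "h \<in> Hom X B B" unfolding h_def using gdH gH by (rule comp)
  define P where "P = Cmp X g \<phi>"
  have PH: "P \<in> Hom X B B" unfolding P_def using \<phi> gH by (rule comp)
  have K1: "Cmp X \<phi> h = Dag X g"
  proof -
    have "Cmp X \<phi> h = Cmp X (Cmp X \<phi> g) (Dag X g)" unfolding h_def using assoc[OF gdH gH \<phi>] .
    also have "\<dots> = Cmp X (Dag X (Cmp X \<phi> g)) (Dag X g)" using g3 by simp
    also have "\<dots> = Dag X (Cmp X g (Cmp X \<phi> g))" using dagcmp[OF comp[OF gH \<phi>] gH] by simp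
    also have "\<dots> = Dag X g" using g2 by simp
    finally show ?thesis .
  qed
  have K2: "Cmp X (Dag X g) \<alpha> = \<phi>"
  proof -
    have "Cmp X (Dag X g) \<alpha> = Cmp X (Cmp X (Dag X g) (Dag X \<phi>)) \<phi>" unfolding aeq using assoc[OF \<phi> dphi gdH] .
    also have "Cmp X (Dag X g) (Dag X \<phi>) = Cmp X \<phi> g" using dagcmp[OF gH \<phi>] g3 by simp
    also have "Cmp X (Cmp X \<phi> g) \<phi> = \<phi>" using assoc[OF \<phi> gH \<phi>] g1 by simp
    finally show ?thesis .
  qed
  have dalpha: "Dag X \<alpha> = \<alpha>" unfolding aeq using dagcmp[OF \<phi> dphi] dagdag[OF \<phi>] by simp
  have L1: "Cmp X \<alpha> h = P"
  proof -
    have "Cmp X \<alpha> h = Cmp X (Dag X \<phi>) (Cmp X \<phi> h)" unfolding aeq using assoc[OF hH \<phi> dphi] by simp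
    also have "\<dots> = Cmp X (Dag X \<phi>) (Dag X g)" using K1 by simp
    also have "\<dots> = Dag X P" unfolding P_def using dagcmp[OF \<phi> gH] by simp
    also have "\<dots> = P" unfolding P_def using g4 .
    finally show ?thesis .
  qed
  have L3: "Cmp X h \<alpha> = P"
    unfolding h_def P_def using assoc[OF \<alpha> gdH gH] K2 by simp
  have aP: "Cmp X \<alpha> P = \<alpha>"
    unfolding P_def aeq using assoc[OF comp[OF \<phi> gH] \<phi> dphi] g1
    by simp
  have mpa: "is_mp_inverse X B B \<alpha> h"
    unfolding is_mp_inverse_def
  proof (intro conjI)
    show "h \<in> Hom X B B" by (rule hH)
    show "Cmp X \<alpha> (Cmp X h \<alpha>) = \<alpha>" using L3 aP by simp
    show "Cmp X h (Cmp X \<alpha> h) = h"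
    proof -
      have "Cmp X h (Cmp X \<alpha> h) = Cmp X (Cmp X h \<alpha>) h" using assoc[OF hH \<alpha> hH] .
      also have "\<dots> = Cmp X P h" using L3 by simp
      also have "\<dots> = Cmp X g (Cmp X \<phi> h)" unfolding P_def using assoc[OF hH \<phi> gH] by simp
      also have "\<dots> = h" using K1 h_def by simp
      finally show ?thesis .
    qed
    show "Dag X (Cmp X \<alpha> h) = Cmp X \<alpha> h" using L1 g4 P_def by simp
    show "Dag X (Cmp X h \<alpha>) = Cmp X h \<alpha>" using L3 g4 P_def by simp
  qed
  have ia: "mp_inv X B B \<alpha> = h" by (rule mp_inv_eq[OF \<alpha> mpa])
  have ip: "mp_inv X B D \<phi> = g" by (rule mp_inv_eq[OF \<phi> g])
  have dbeta: "Dag X \<beta> = Cmp X (Dag X \<psi>) \<phi>" unfolding beq using dagcmp[OF \<psi> dphi] dagdag[OF \<phi>] by simp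
  show ?thesis unfolding ia ip dbeta using assoc[OF hH \<phi> dpsi] K1 by simp
qed

end

theorem mainTheorem14:
  fixes X :: "('o, 'm) dcat"
    and B C D S :: 'o
    and p1 p2 i1 i2 \<alpha> \<beta> \<delta> \<phi> \<psi> :: 'm
  assumes "mp_dagger_additive_category X"
    and "is_dagger_biproduct X B C S p1 p2 i1 i2"
    and "\<alpha> \<in> Hom X B B" and "\<beta> \<in> Hom X C B" and "\<delta> \<in> Hom X C C"
    and "\<phi> \<in> Hom X B D" and "\<psi> \<in> Hom X C D"
    and "M = Add X (Add X (Cmp X i1 (Cmp X \<alpha> p1)) (Cmp X i1 (Cmp X \<beta> p2)))
                   (Add X (Cmp X i2 (Cmp X (Dag X \<beta>) p1)) (Cmp X i2 (Cmp X \<delta> p2)))"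
    and "dagger_positive X S M"
    and "R = Add X (Cmp X \<phi> p1) (Cmp X \<psi> p2)"
    and "M = Cmp X (Dag X R) R"
  shows "Cmp X (Dag X \<beta>) (mp_inv X B B \<alpha>) = Cmp X (Dag X \<psi>) (Dag X (mp_inv X B D \<phi>))"
  proof -
  have ax: "dagger_additive_category X" and mp: "\<forall>A B f. f \<in> Hom X A B \<longrightarrow> (\<exists>g. is_mp_inverse X A B f g)"
    using assms(1) unfolding mp_dagger_additive_category_def by auto
  interpret dac X by (rule dac.intro[OF ax])
  show ?thesis by (rule main_loc[OF mp assms(2-8) assms(10) assms(11)])
qed

end
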